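(* Let $k\ge 1$ and $n\ge 3k-1$ be integers. Let $x,y\in\mathbb{Z}^2$ with $x\ne y$, $3k-n<d(x,y)\le k$, and \[\pi_n\big(B_{\mathbb{Z}^2}[x,k]\cap B_{\mathbb{Z}^2}[y,k]\big)=\pi_n\big(B_{\mathbb{Z}^2}[x,k]\big)\cap\pi_n\big(B_{\mathbb{Z}^2}[y,k]\big).\] Then every maximal simplex $\tau$ of $\mathrm{VR}(T_{n,n};k)$ containing $\pi_n(x)$ and $\pi_n(y)$ is of the form $\tau=\pi_n(\sigma)$ for some maximal simplex $\sigma$ of $\mathrm{VR}(\mathbb{Z}^2;k)$.
   Context: $\mathbb{Z}^2$ carries the $l^1$ metric $d$, and $B_{\mathbb{Z}^2}[x,k]=\{z\in\mathbb{Z}^2: d(x,z)\le k\}$. $T_{n,n}=\mathbb{Z}^2/(n\mathbb{Z}\times n\mathbb{Z})$ with quotient map $\pi_n$ (reduction of both coordinates mod $n$) and quotient metric $d([x],[y])=\min\{d(x',y'): \pi_n(x')=[x],\pi_n(y')=[y]\}$. $\mathrm{VR}(X;r)$ is the simplicial complex on vertex set $X$ whose simplices are the finite nonempty subsets of diameter at most $r$; a maximal simplex is one not properly contained in another simplex. *)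

theory Defs
  imports Main
begin

type_synonym pt = "int \<times> int"

definition l1 :: "pt \<Rightarrow> pt \<Rightarrow> int" where
  "l1 p q = \<bar>fst p - fst q\<bar> + \<bar>snd p - snd q\<bar>"

definition ballZ :: "pt \<Rightarrow> int \<Rightarrow> pt set" where
  "ballZ x k = {z. l1 x z \<le> k}"

text \<open>Torus T_{n,n}: classes represented by their reduced representatives in {0..<n}^2\<close>
definition torus :: "int \<Rightarrow> pt set" where
  "torus n = {0..<n} \<times> {0..<n}"

definition proj :: "int \<Rightarrow> pt \<Rightarrow> pt" where
  "proj n p = (fst p mod n, snd p mod n)"

definition tdist :: "int \<Rightarrow> pt \<Rightarrow> pt \<Rightarrow> int" where
  "tdist n a b = Inf {l1 x' y' | x' y'. proj n x' = a \<and> proj n y' = b}"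

definition vr_simplex :: "'a set \<Rightarrow> ('a \<Rightarrow> 'a \<Rightarrow> int) \<Rightarrow> int \<Rightarrow> 'a set \<Rightarrow> bool" where
  "vr_simplex X dist r S \<longleftrightarrow>
     S \<subseteq> X \<and> finite S \<and> S \<noteq> {} \<and> (\<forall>u\<in>S. \<forall>v\<in>S. dist u v \<le> r)"

definition vr_maximal :: "'a set \<Rightarrow> ('a \<Rightarrow> 'a \<Rightarrow> int) \<Rightarrow> int \<Rightarrow> 'a set \<Rightarrow> bool" where
  "vr_maximal X dist r S \<longleftrightarrow>
     vr_simplex X dist r S \<and> (\<forall>S'. vr_simplex X dist r S' \<and> S \<subseteq> S' \<longrightarrow> S' = S)"

end

theory Submission
  imports Defs
begin

lemma abs_rot: assumes "\<bar>a\<bar> + \<bar>b\<bar> \<le> (k::int)" shows "\<bar>a + b\<bar> \<le> k" "\<bar>a - b\<bar> \<le> k" using assms by arith+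
lemma abs_rot2: "\<bar>a\<bar> + \<bar>b\<bar> = max \<bar>a + b\<bar> \<bar>a - b\<bar>" for a b :: int by arith

lemma nmul: "(s::int) \<noteq> 0 \<Longrightarrow> n \<ge> 0 \<Longrightarrow> \<bar>n * s\<bar> \<ge> n"
proof -
  assume "s \<noteq> 0" "n \<ge> 0"
  then have "\<bar>s\<bar> \<ge> 1" by arith
  then have "n * 1 \<le> n * \<bar>s\<bar>" using \<open>n \<ge> 0\<close> by (intro mult_left_mono) auto
  then show ?thesis by (simp add: abs_mult \<open>n \<ge> 0\<close>)
qed

lemma key_arith:
  fixes k n x1 x2 y1 y2 z1 z2 w1 w2 a b :: int
  assumes k: "k \<ge> 1" and n: "n \<ge> 3 * k - 1"
    and xy: "3 * k - n < \<bar>x1 - y1\<bar> + \<bar>x2 - y2\<bar>"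
    and xz: "\<bar>x1 - z1\<bar> + \<bar>x2 - z2\<bar> \<le> k" and yz: "\<bar>y1 - z1\<bar> + \<bar>y2 - z2\<bar> \<le> k"
    and xw: "\<bar>x1 - w1\<bar> + \<bar>x2 - w2\<bar> \<le> k" and yw: "\<bar>y1 - w1\<bar> + \<bar>y2 - w2\<bar> \<le> k"
    and zw: "\<bar>z1 - (w1 + n * a)\<bar> + \<bar>z2 - (w2 + n * b)\<bar> \<le> k"
  shows "a = 0 \<and> b = 0"
proof (rule ccontr)
  assume nz: "\<not> (a = 0 \<and> b = 0)"
  have n0: "n \<ge> 0" using k n by linarith
  note r1 = abs_rot[OF xz] and r2 = abs_rot[OF yz] and r3 = abs_rot[OF xw] and r4 = abs_rot[OF yw]
    and r5 = abs_rot[OF zw]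
  have xy': "3 * k - n < max \<bar>(x1 - y1) + (x2 - y2)\<bar> \<bar>(x1 - y1) - (x2 - y2)\<bar>"
    using xy abs_rot2[of "x1 - y1" "x2 - y2"] by simp
  define p where "p = n * a"
  define q where "q = n * b"
  have zw': "\<bar>(z1 - w1 + (z2 - w2)) - (p + q)\<bar> \<le> k" "\<bar>(z1 - w1 - (z2 - w2)) - (p - q)\<bar> \<le> k"
    using r5 unfolding p_def q_def by (simp_all add: algebra_simps)
  show False
  proof (cases "a + b = 0")
    case True
    then have e: "b = - a" by auto
    then have "a \<noteq> 0" using nz by auto
    have "p - q = 2 * (n * a)" using e unfolding p_def q_def by (simp add: algebra_simps)
    moreover have "\<bar>n * a\<bar> \<ge> n" using nmul[of a n] n0 \<open>a \<noteq> 0\<close> by auto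
    ultimately have "\<bar>p - q\<bar> \<ge> 2 * n" by linarith
    then show False using r1(2) r3(2) zw'(2) k n by arith
  next
    case F1: False
    show False
    proof (cases "a - b = 0")
      case True
      then have e: "b = a" by auto
      then have "a \<noteq> 0" using nz by auto
      have "p + q = 2 * (n * a)" using e unfolding p_def q_def by (simp add: algebra_simps)
      moreover have "\<bar>n * a\<bar> \<ge> n" using nmul[of a n] n0 \<open>a \<noteq> 0\<close> by auto
      ultimately have "\<bar>p + q\<bar> \<ge> 2 * n" by linarith
      then show False using r1(1) r3(1) zw'(1) k n by arith
    next
      case False
      have A: "\<bar>p + q\<bar> \<ge> n" "\<bar>p - q\<bar> \<ge> n" 
        using nmul[of "a+b" n] nmul[of "a-b" n] n0 F1 False unfolding p_def q_def
        by (simp_all add: algebra_simps)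
      show False
      proof (cases "\<bar>(x1 - y1) + (x2 - y2)\<bar> \<ge> \<bar>(x1 - y1) - (x2 - y2)\<bar>")
        case True
        then have "3 * k - n < \<bar>(x1 - y1) + (x2 - y2)\<bar>" using xy' by simp
        then show False using A(1) r1(1) r2(1) r3(1) r4(1) zw'(1) by arith
      next
        case False
        then have "3 * k - n < \<bar>(x1 - y1) - (x2 - y2)\<bar>" using xy' by simp
        then show False using A(2) r1(2) r2(2) r3(2) r4(2) zw'(2) by arith
      qed
    qed
  qed
qed

lemma proj_torus: "n > 0 \<Longrightarrow> proj n p \<in> torus n"
  by (simp add: proj_def torus_def)

lemma proj_id: "a \<in> torus n \<Longrightarrow> proj n a = a"
  by (cases a) (auto simp: proj_def torus_def)

lemma l1_nonneg: "l1 a b \<ge> 0" by (simp add: l1_def)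

lemma tdist_le: "tdist n (proj n a) (proj n b) \<le> l1 a b"
  unfolding tdist_def
proof (rule cInf_lower)
  show "l1 a b \<in> {l1 x' y' |x' y'. proj n x' = proj n a \<and> proj n y' = proj n b}" by blast
  show "bdd_below {l1 x' y' |x' y'. proj n x' = proj n a \<and> proj n y' = proj n b}"
    by (rule bdd_belowI[where m=0]) (auto simp: l1_nonneg)
qed

lemma tdist_ex:
  assumes "a \<in> torus n" "b \<in> torus n" "tdist n a b \<le> k"
  shows "\<exists>a' b'. proj n a' = a \<and> proj n b' = b \<and> l1 a' b' \<le> k"
proof (rule ccontr)
  assume H: "\<not> ?thesis"
  have "k + 1 \<le> tdist n a b" unfolding tdist_def
  proof (rule cInf_greatest)
    show "{l1 x' y' |x' y'. proj n x' = a \<and> proj n y' = b} \<noteq> {}"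
      using proj_id[OF assms(1)] proj_id[OF assms(2)] by blast
  next
    fix m assume "m \<in> {l1 x' y' |x' y'. proj n x' = a \<and> proj n y' = b}"
    then show "k + 1 \<le> m" using H by force
  qed
  then show False using assms(3) by simp
qed

lemma proj_eq:
  assumes "proj n p = proj n q"
  shows "\<exists>i j. fst p = fst q + n * i \<and> snd p = snd q + n * j"
proof -
  have "n dvd fst p - fst q" "n dvd snd p - snd q"
    using assms by (auto simp: proj_def mod_eq_dvd_iff)
  then obtain i j where "fst p - fst q = n * i" "snd p - snd q = n * j" by (auto elim!: dvdE)
  then show ?thesis by (intro exI[of _ i] exI[of _ j]) simp
qed

lemma proj_shift: "proj n (a + n * i, b + n * j) = proj n (a, b)"
  by (simp add: proj_def)

lemma lift_close:
  fixes k n :: int and x y z w :: pt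
  assumes k: "k \<ge> 1" and n: "n \<ge> 3 * k - 1"
    and xy: "3 * k - n < l1 x y"
    and z: "z \<in> ballZ x k \<inter> ballZ y k" and w: "w \<in> ballZ x k \<inter> ballZ y k"
    and td: "tdist n (proj n z) (proj n w) \<le> k"
  shows "l1 z w \<le> k"
proof -
  have n0: "n > 0" using k n by linarith
  obtain z' w' where zw: "proj n z' = proj n z" "proj n w' = proj n w" "l1 z' w' \<le> k"
    using tdist_ex[OF proj_torus[OF n0] proj_torus[OF n0] td] by blast
  obtain i1 j1 where e1: "fst z' = fst z + n * i1" "snd z' = snd z + n * j1" using proj_eq[OF zw(1)] by blast
  obtain i2 j2 where e2: "fst w' = fst w + n * i2" "snd w' = snd w + n * j2" using proj_eq[OF zw(2)] by blast
  have "\<bar>fst z - (fst w + n * (i2 - i1))\<bar> + \<bar>snd z - (snd w + n * (j2 - j1))\<bar> \<le> k"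
    using zw(3) e1 e2 by (simp add: l1_def algebra_simps)
  then have "i2 - i1 = 0 \<and> j2 - j1 = 0"
    using key_arith[OF k n, of "fst x" "fst y" "snd x" "snd y" "fst z" "snd z" "fst w" "snd w" "i2 - i1" "j2 - j1"]
      xy z w by (auto simp: l1_def ballZ_def)
  then show ?thesis using zw(3) e1 e2 by (simp add: l1_def)
qed

lemma finite_ballZ: "finite (ballZ s k)"
proof -
  have "ballZ s k \<subseteq> {fst s - k..fst s + k} \<times> {snd s - k..snd s + k}"
    by (auto simp: ballZ_def l1_def)
  then show ?thesis by (rule finite_subset) simp
qed

theorem lemma5p3:
  fixes k n :: int and x y :: pt
  assumes "k \<ge> 1" and "n \<ge> 3 * k - 1"
    and "x \<noteq> y" and "3 * k - n < l1 x y" and "l1 x y \<le> k"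
    and "proj n ` (ballZ x k \<inter> ballZ y k) = proj n ` ballZ x k \<inter> proj n ` ballZ y k"
  shows "\<forall>\<tau>. vr_maximal (torus n) (tdist n) k \<tau> \<and> proj n x \<in> \<tau> \<and> proj n y \<in> \<tau>
           \<longrightarrow> (\<exists>\<sigma>. vr_maximal UNIV l1 k \<sigma> \<and> \<tau> = proj n ` \<sigma>)"
proof (intro allI impI)
  fix \<tau> assume H: "vr_maximal (torus n) (tdist n) k \<tau> \<and> proj n x \<in> \<tau> \<and> proj n y \<in> \<tau>"
  have n0: "n > 0" using assms(1,2) by linarith
  have simp\<tau>: "\<tau> \<subseteq> torus n" "finite \<tau>" "\<tau> \<noteq> {}" "\<And>u v. u \<in> \<tau> \<Longrightarrow> v \<in> \<tau> \<Longrightarrow> tdist n u v \<le> k"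
    using H by (auto simp: vr_maximal_def vr_simplex_def)
  have maxi: "\<And>S'. vr_simplex (torus n) (tdist n) k S' \<Longrightarrow> \<tau> \<subseteq> S' \<Longrightarrow> S' = \<tau>"
    using H by (auto simp: vr_maximal_def)
  have inball: "t \<in> proj n ` ballZ c k" if "t \<in> \<tau>" "proj n c \<in> \<tau>" for t c
  proof -
    have "tdist n (proj n c) t \<le> k" using simp\<tau>(4) that by blast
    moreover have "t \<in> torus n" using simp\<tau>(1) that by blast
    ultimately obtain a' b' where ab: "proj n a' = proj n c" "proj n b' = t" "l1 a' b' \<le> k"
      using tdist_ex[OF proj_torus[OF n0]] by blast
    obtain i j where e: "fst a' = fst c + n * i" "snd a' = snd c + n * j" using proj_eq[OF ab(1)] by blast
    define z where "z = (fst b' + n * (- i), snd b' + n * (- j))"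
    have "proj n z = proj n b'" unfolding z_def using proj_shift[of n "fst b'" "- i" "snd b'" "- j"] by simp
    moreover have "l1 c z = l1 a' b'" unfolding z_def l1_def using e by (simp add: algebra_simps)
    ultimately have "z \<in> ballZ c k" "proj n z = t" using ab by (auto simp: ballZ_def)
    then show ?thesis by (metis image_eqI)
  qed
  have "\<forall>t\<in>\<tau>. \<exists>z. z \<in> ballZ x k \<inter> ballZ y k \<and> proj n z = t"
  proof
    fix t assume "t \<in> \<tau>"
    then have "t \<in> proj n ` (ballZ x k \<inter> ballZ y k)"
      using inball[of t x] inball[of t y] H assms(6) by blast
    then show "\<exists>z. z \<in> ballZ x k \<inter> ballZ y k \<and> proj n z = t" by blast
  qed
  then obtain f where f: "\<And>t. t \<in> \<tau> \<Longrightarrow> f t \<in> ballZ x k \<inter> ballZ y k \<and> proj n (f t) = t"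
    by metis
  define S where "S = f ` \<tau>"
  have Ssimp: "vr_simplex UNIV l1 k S"
    unfolding vr_simplex_def S_def
  proof (intro conjI ballI)
    fix u v assume "u \<in> f ` \<tau>" "v \<in> f ` \<tau>"
    then obtain t t' where tt: "t \<in> \<tau>" "t' \<in> \<tau>" "u = f t" "v = f t'" by blast
    have "tdist n (proj n (f t)) (proj n (f t')) \<le> k" using f tt simp\<tau>(4) by simp
    then show "l1 u v \<le> k" using lift_close[OF assms(1,2,4)] f tt by blast
  qed (use simp\<tau> in auto)
  define A where "A = {S'. vr_simplex UNIV l1 k S' \<and> S \<subseteq> S'}"
  obtain s0 where s0: "s0 \<in> S" using Ssimp by (auto simp: vr_simplex_def)
  have "A \<subseteq> Pow (ballZ s0 k)"
    unfolding A_def vr_simplex_def ballZ_def using s0 by blast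
  then have "finite A" using finite_ballZ by (meson finite_Pow_iff finite_subset)
  moreover have "S \<in> A" using Ssimp by (simp add: A_def)
  ultimately obtain m where m: "m \<in> A" "S \<subseteq> m" "\<And>b. b \<in> A \<Longrightarrow> m \<subseteq> b \<Longrightarrow> m = b"
    using finite_has_maximal2[of A S] by blast
  have mmax: "vr_maximal UNIV l1 k m"
    unfolding vr_maximal_def
  proof (intro conjI allI impI)
    show "vr_simplex UNIV l1 k m" using m(1) by (simp add: A_def)
    fix S' assume "vr_simplex UNIV l1 k S' \<and> m \<subseteq> S'"
    then show "S' = m" using m unfolding A_def by blast
  qed
  have "vr_simplex (torus n) (tdist n) k (proj n ` m)"
    unfolding vr_simplex_def
  proof (intro conjI ballI)
    show "proj n ` m \<subseteq> torus n" using proj_torus[OF n0] by blast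
    show "finite (proj n ` m)" "proj n ` m \<noteq> {}" using m(1) by (auto simp: A_def vr_simplex_def)
    fix u v assume "u \<in> proj n ` m" "v \<in> proj n ` m"
    then obtain a b where "a \<in> m" "b \<in> m" "u = proj n a" "v = proj n b" by blast
    then show "tdist n u v \<le> k" using tdist_le[of n a b] m(1)
      by (force simp: A_def vr_simplex_def)
  qed
  moreover have "\<tau> \<subseteq> proj n ` m"
  proof
    fix t assume "t \<in> \<tau>"
    then have "f t \<in> m" "proj n (f t) = t" using f m(2) S_def by auto
    then show "t \<in> proj n ` m" by force
  qed
  ultimately have "proj n ` m = \<tau>" using maxi by blast
  then show "\<exists>\<sigma>. vr_maximal UNIV l1 k \<sigma> \<and> \<tau> = proj n ` \<sigma>" using mmax by blast
qed

end
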